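(* Let $(X,d^\star)$ be a $\star$-metric space and define $\tilde{d^\star}(x,y)=\min\{1,d^\star(x,y)\}$ for $x,y\in X$. Then $\tilde{d^\star}$ is a $\star$-metric on $X$ (for the same $t$-definer $\star$), and the topology induced by $\tilde{d^\star}$ on $X$ coincides with the topology induced by $d^\star$.
   Context: A $t$-definer is a function $\star:[0,\infty)\times[0,\infty)\to[0,\infty)$ such that for all $a,b,c\ge 0$: $a\star b=b\star a$; $a\star(b\star c)=(a\star b)\star c$; if $a\le b$ then $a\star c\le b\star c$; $a\star 0=a$; and $\star$ is continuous in its first variable with respect to the Euclidean topology. Given a nonempty set $X$ and a $t$-definer $\star$, a $\star$-metric on $X$ is a function $d:X\times X\to[0,\infty)$ such that for all $x,y,z\in X$: $d(x,y)=0$ iff $x=y$; $d(x,y)=d(y,x)$; and $d(x,y)\le d(x,z)\star d(z,y)$. The topology induced by a $\star$-metric $d$ consists of all $U\subseteq X$ such that for each $a\in U$ there is $r>0$ with $\{x\in X: d(a,x)<r\}\subseteq U$. *)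

theory Defs
  imports "HOL-Analysis.Analysis"
begin

text \<open>A t-definer: a binary operation on [0,\<infinity>) (represented on real, constrained to nonnegative arguments).\<close>
definition t_definer :: "(real \<Rightarrow> real \<Rightarrow> real) \<Rightarrow> bool" where
  "t_definer star \<longleftrightarrow>
     (\<forall>a\<ge>0. \<forall>b\<ge>0. star a b \<ge> 0) \<and>
     (\<forall>a\<ge>0. \<forall>b\<ge>0. star a b = star b a) \<and>
     (\<forall>a\<ge>0. \<forall>b\<ge>0. \<forall>c\<ge>0. star a (star b c) = star (star a b) c) \<and>
     (\<forall>a\<ge>0. \<forall>b\<ge>0. \<forall>c\<ge>0. a \<le> b \<longrightarrow> star a c \<le> star b c) \<and>
     (\<forall>a\<ge>0. star a 0 = a) \<and>
     (\<forall>c\<ge>0. continuous_on {0..} (\<lambda>a. star a c))"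

definition star_metric :: "'a set \<Rightarrow> (real \<Rightarrow> real \<Rightarrow> real) \<Rightarrow> ('a \<Rightarrow> 'a \<Rightarrow> real) \<Rightarrow> bool" where
  "star_metric X star d \<longleftrightarrow>
     (\<forall>x\<in>X. \<forall>y\<in>X. d x y \<ge> 0) \<and>
     (\<forall>x\<in>X. \<forall>y\<in>X. d x y = 0 \<longleftrightarrow> x = y) \<and>
     (\<forall>x\<in>X. \<forall>y\<in>X. d x y = d y x) \<and>
     (\<forall>x\<in>X. \<forall>y\<in>X. \<forall>z\<in>X. d x y \<le> star (d x z) (d z y))"

definition star_topology :: "'a set \<Rightarrow> ('a \<Rightarrow> 'a \<Rightarrow> real) \<Rightarrow> 'a set set" where
  "star_topology X d =
     {U. U \<subseteq> X \<and> (\<forall>a\<in>U. \<exists>r>0. {x\<in>X. d a x < r} \<subseteq> U)}"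

end

theory Submission
  imports Defs
begin

lemma star_ge_left:
  assumes "t_definer star" "a \<ge> 0" "b \<ge> 0"
  shows "star a b \<ge> a"
proof -
  note T = assms(1)[unfolded t_definer_def]
  have C: "\<forall>a\<ge>0. \<forall>b\<ge>0. star a b = star b a"
    using T[THEN conjunct2, THEN conjunct1] .
  have M: "\<forall>a\<ge>0. \<forall>b\<ge>0. \<forall>c\<ge>0. a \<le> b \<longrightarrow> star a c \<le> star b c"
    using T[THEN conjunct2, THEN conjunct2, THEN conjunct2, THEN conjunct1] .
  have Z: "\<forall>a\<ge>0. star a 0 = a"
    using T[THEN conjunct2, THEN conjunct2, THEN conjunct2, THEN conjunct2, THEN conjunct1] .
  have "star a b = star b a" using C assms(2,3) by simp
  moreover have "star 0 a \<le> star b a" using M assms(2,3) by simp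
  moreover have "star 0 a = star a 0" using C assms(2) by simp
  moreover have "star a 0 = a" using Z assms(2) by simp
  ultimately show ?thesis by linarith
qed

lemma star_ge_right:
  assumes "t_definer star" "a \<ge> 0" "b \<ge> 0"
  shows "star a b \<ge> b"
proof -
  note T = assms(1)[unfolded t_definer_def]
  have C: "\<forall>a\<ge>0. \<forall>b\<ge>0. star a b = star b a"
    using T[THEN conjunct2, THEN conjunct1] .
  have "star a b = star b a" using C assms(2,3) by simp
  thus ?thesis using star_ge_left[OF assms(1,3,2)] by simp
qed

theorem proposition3p8:
  fixes X :: "'a set" and star :: "real \<Rightarrow> real \<Rightarrow> real" and d :: "'a \<Rightarrow> 'a \<Rightarrow> real"
  assumes "X \<noteq> {}" and "t_definer star" and "star_metric X star d"
  shows "star_metric X star (\<lambda>x y. min 1 (d x y)) \<and>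
         star_topology X (\<lambda>x y. min 1 (d x y)) = star_topology X d"
proof
  note M = assms(3)[unfolded star_metric_def]
  have nn': "\<forall>x\<in>X. \<forall>y\<in>X. d x y \<ge> 0" using M[THEN conjunct1] .
  have zz: "\<forall>x\<in>X. \<forall>y\<in>X. d x y = 0 \<longleftrightarrow> x = y" using M[THEN conjunct2, THEN conjunct1] .
  have sy: "\<forall>x\<in>X. \<forall>y\<in>X. d x y = d y x" using M[THEN conjunct2, THEN conjunct2, THEN conjunct1] .
  have tri': "\<forall>x\<in>X. \<forall>y\<in>X. \<forall>z\<in>X. d x y \<le> star (d x z) (d z y)"
    using M[THEN conjunct2, THEN conjunct2, THEN conjunct2] .
  have nn: "\<And>x y. x \<in> X \<Longrightarrow> y \<in> X \<Longrightarrow> d x y \<ge> 0" using nn' by simp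
  have tri: "\<And>x y z. x \<in> X \<Longrightarrow> y \<in> X \<Longrightarrow> z \<in> X \<Longrightarrow> d x y \<le> star (d x z) (d z y)"
    using tri' by simp
  have T1: "min 1 (d x y) \<le> star (min 1 (d x z)) (min 1 (d z y))" if "x \<in> X" "y \<in> X" "z \<in> X" for x y z
  proof -
    have a: "d x z \<ge> 0" "d z y \<ge> 0" using nn that by auto
    consider "d x z \<le> 1 \<and> d z y \<le> 1" | "\<not> d x z \<le> 1" | "\<not> d z y \<le> 1" by linarith
    then show ?thesis
    proof cases
      case 1
      then show ?thesis using tri[OF that] by simp
    next
      case 2
      then show ?thesis using star_ge_left[OF assms(2), of 1 "min 1 (d z y)"] a by simp
    next
      case 3
      then show ?thesis using star_ge_right[OF assms(2), of "min 1 (d x z)" 1] a by simp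
    qed
  qed
  have "\<forall>x\<in>X. \<forall>y\<in>X. \<forall>z\<in>X. min 1 (d x y) \<le> star (min 1 (d x z)) (min 1 (d z y))"
    using T1 by simp
  moreover have "\<forall>x\<in>X. \<forall>y\<in>X. min 1 (d x y) \<ge> 0" using nn by simp
  moreover have "\<forall>x\<in>X. \<forall>y\<in>X. min 1 (d x y) = 0 \<longleftrightarrow> x = y"
  proof (intro ballI)
    fix x y assume "x \<in> X" "y \<in> X"
    then have "d x y = 0 \<longleftrightarrow> x = y" using zz by simp
    then show "min 1 (d x y) = 0 \<longleftrightarrow> x = y" by (auto simp add: min_def)
  qed
  moreover have "\<forall>x\<in>X. \<forall>y\<in>X. min 1 (d x y) = min 1 (d y x)"
    using sy by metis
  ultimately show "star_metric X star (\<lambda>x y. min 1 (d x y))"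
    unfolding star_metric_def by (intro conjI)
next
  show "star_topology X (\<lambda>x y. min 1 (d x y)) = star_topology X d"
  proof -
    have "(\<exists>r>0. {x\<in>X. min 1 (d a x) < r} \<subseteq> U) \<longleftrightarrow> (\<exists>r>0. {x\<in>X. d a x < r} \<subseteq> U)" for a U
    proof
      assume "\<exists>r>0. {x\<in>X. min 1 (d a x) < r} \<subseteq> U"
      then obtain r where r: "r > 0" "{x\<in>X. min 1 (d a x) < r} \<subseteq> U" by blast
      have "{x\<in>X. d a x < min 1 r} \<subseteq> {x\<in>X. min 1 (d a x) < r}" by auto
      then show "\<exists>r>0. {x\<in>X. d a x < r} \<subseteq> U" using r by (intro exI[of _ "min 1 r"]) auto
    next
      assume "\<exists>r>0. {x\<in>X. d a x < r} \<subseteq> U"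
      then obtain r where r: "r > 0" "{x\<in>X. d a x < r} \<subseteq> U" by blast
      have "{x\<in>X. min 1 (d a x) < min 1 r} \<subseteq> {x\<in>X. d a x < r}" by auto
      then show "\<exists>r>0. {x\<in>X. min 1 (d a x) < r} \<subseteq> U" using r by (intro exI[of _ "min 1 r"]) auto
    qed
    then show ?thesis unfolding star_topology_def by simp
  qed
qed

end
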